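(* Fix $p\in(0,\infty)$ and $\omega\in(0,1)$. Let $$\eta(p,\omega)=\inf_{\sigma\in[0,1)}\frac{1-\sigma^\omega}{1-\sigma}(1+\sigma^{p\omega})^{\frac{1-\omega}{p\omega}},$$ and suppose $D\in\mathbb R$ satisfies $D>\dfrac{2^{(1-\omega)(1+\frac1{p\omega})}}{\eta(p,\omega)}$. Then for any Banach space $(X,\|\cdot\|_X)$, the $\omega$-snowflake of $X$ embeds with $p$-average distortion $D$ into $X$: for every Borel probability measure $\mu$ on $X$ there is $f:X\to X$ with $\|f(x)-f(y)\|_X\le D\|x-y\|_X^\omega$ for all $x,y\in X$ and $\iint\|f(x)-f(y)\|_X^pd\mu(x)d\mu(y)\ge\iint\|x-y\|_X^{p\omega}d\mu(x)d\mu(y)$. *)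

theory Defs
  imports "HOL-Probability.Probability"
begin

definition eta :: "real \<Rightarrow> real \<Rightarrow> real" where
  "eta p \<omega> = (INF \<sigma>\<in>{0..<1::real}.
      (1 - \<sigma> powr \<omega>) / (1 - \<sigma>) * (1 + \<sigma> powr (p * \<omega>)) powr ((1 - \<omega>) / (p * \<omega>)))"

end

theory Submission
  imports Defs
begin

lemma young0:
  fixes a b w :: real
  assumes "0 \<le> a" "0 \<le> b" "0 < w" "w < 1"
  shows "a powr w * b powr (1 - w) \<le> w * a + (1 - w) * b"
proof (cases "a = 0 \<or> b = 0")
  case True then show ?thesis using assms by auto
next
  case False then show ?thesis using assms Youngs_inequality_0[of w "1-w" a b] by auto
qed

lemma tangent_powr:
  fixes y z w :: real
  assumes "0 \<le> y" "0 < z" "0 < w" "w < 1"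
  shows "y powr w \<le> z powr w + w * z powr (w - 1) * (y - z)"
proof -
  have e1: "z powr (1 - w) * z powr (w - 1) = 1" using assms by (simp flip: powr_add)
  have e2: "z powr (w - 1) * z = z powr w" using assms powr_add[of z "w-1" 1] by simp
  have "y powr w = (y powr w * z powr (1 - w)) * z powr (w - 1)" using e1 by (simp add: mult.assoc)
  also have "\<dots> \<le> (w * y + (1 - w) * z) * z powr (w - 1)"
    using young0[of y z w] assms by (intro mult_right_mono) auto
  also have "\<dots> = z powr w + w * z powr (w - 1) * (y - z)"
    using e2 by (simp add: algebra_simps)
  finally show ?thesis .
qed

lemma concave_powr:
  fixes a b l w :: real
  assumes "0 \<le> a" "0 \<le> b" "0 \<le> l" "l \<le> 1" "0 < w" "w < 1"
  shows "l * a powr w + (1 - l) * b powr w \<le> (l * a + (1 - l) * b) powr w"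
proof (cases "l * a + (1 - l) * b = 0")
  case True
  then have "l * a = 0" "(1 - l) * b = 0" using assms by (smt (verit) mult_nonneg_nonneg)+
  then show ?thesis using assms by auto
next
  case False
  define z where "z = l * a + (1 - l) * b"
  have z: "0 < z" using False assms unfolding z_def by (smt (verit) mult_nonneg_nonneg)
  have "l * a powr w + (1 - l) * b powr w \<le> l * (z powr w + w * z powr (w - 1) * (a - z))
      + (1 - l) * (z powr w + w * z powr (w - 1) * (b - z))"
    using tangent_powr[OF assms(1) z assms(5,6)] tangent_powr[OF assms(2) z assms(5,6)] assms
    by (intro add_mono mult_left_mono) auto
  also have "\<dots> = z powr w + w * z powr (w - 1) * (l * a + (1 - l) * b - z)"
    by (simp add: algebra_simps)
  also have "\<dots> = z powr w" unfolding z_def by simp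
  finally show ?thesis unfolding z_def .
qed

lemma bernoulli_powr:
  fixes t w :: real
  assumes "0 \<le> t" "t \<le> 1" "0 < w" "w < 1"
  shows "(1 - t) powr w \<le> 1 - w * t"
  using tangent_powr[of "1 - t" 1 w] assms by simp

lemma four_powr_ge:
  fixes u :: real
  assumes "0 \<le> u"
  shows "1 + u \<le> 4 powr u"
proof -
  have "exp 1 \<le> (4::real)" using exp_le by simp
  then have l4: "1 \<le> ln (4::real)" using ln_ge_iff[of 4 1] by simp
  have "1 + u \<le> 1 + u * ln 4" using l4 assms by (simp add: mult_le_cancel_left1)
  also have "\<dots> \<le> exp (u * ln 4)" using exp_ge_add_one_self by (simp add: add.commute)
  also have "\<dots> = 4 powr u" by (simp add: powr_def mult.commute)
  finally show ?thesis .
qed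

lemma key_t:
  fixes t w :: real
  assumes "0 \<le> t" "t \<le> 1/2" "0 < w" "w < 1"
  shows "(2 - w) * t \<le> 2 powr (1 - w) * t powr w"
proof (cases "t = 0")
  case True then show ?thesis using assms by simp
next
  case False
  then have tp: "0 < t" using assms by simp
  have tt: "t = t powr w * t powr (1 - w)" using tp by (simp flip: powr_add)
  have a: "t powr (1 - w) \<le> (1/2) powr (1 - w)" using assms tp by (intro powr_mono2) auto
  have h: "(1/2::real) powr (1 - w) * 2 powr (1 - w) = 1"
    using powr_mult[of "1/2" 2 "1-w", symmetric] by simp
  have "2 - w \<le> 4 powr (1 - w)" using four_powr_ge[of "1 - w"] assms by simp
  also have "\<dots> = 2 powr (1 - w) * 2 powr (1 - w)"
    using powr_mult[of 2 2 "1-w", symmetric] by simp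
  finally have b0: "2 - w \<le> 2 powr (1 - w) * 2 powr (1 - w)" .
  have "(2 - w) * (1/2) powr (1 - w) \<le> (2 powr (1 - w) * 2 powr (1 - w)) * (1/2) powr (1 - w)"
    using b0 by (rule mult_right_mono) simp
  also have "\<dots> = 2 powr (1 - w) * ((1/2) powr (1 - w) * 2 powr (1 - w))" by (simp only: mult_ac)
  also have "\<dots> = 2 powr (1 - w)" using h by simp
  finally have b: "(2 - w) * (1/2) powr (1 - w) \<le> 2 powr (1 - w)" .
  have "(2 - w) * t = (2 - w) * t powr (1 - w) * t powr w" using tt by (simp add: mult.commute mult.left_commute)
  also have "\<dots> \<le> (2 - w) * (1/2) powr (1 - w) * t powr w"
    using a assms by (intro mult_right_mono mult_left_mono) auto
  also have "\<dots> \<le> 2 powr (1 - w) * t powr w" using b by (intro mult_right_mono) auto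
  finally show ?thesis .
qed

lemma pow_ge_self:
  fixes x w :: real
  assumes "0 \<le> x" "x \<le> 1" "0 < w" "w < 1"
  shows "x \<le> x powr w"
proof (cases "x = 0")
  case True then show ?thesis by simp
next
  case False
  then have "x powr 1 \<le> x powr w" using assms by (intro powr_mono') auto
  then show ?thesis using False assms by simp
qed

lemma kF:
  fixes s w :: real
  assumes "1/2 \<le> s" "s \<le> 1" "0 < w" "w < 1"
  shows "s powr w - s \<le> 2 * (((1 - s)/2) powr w - (1 - s)/2)"
proof -
  define t where "t = 1 - s"
  have t: "0 \<le> t" "t \<le> 1/2" using assms unfolding t_def by auto
  have "s powr w - s \<le> (1 - w) * t"
    using bernoulli_powr[of t w] t assms unfolding t_def by (simp add: algebra_simps)
  moreover have "(2 - w) * t \<le> 2 powr (1 - w) * t powr w" using key_t[OF t assms(3,4)] .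
  moreover have "2 * (t/2) powr w = 2 powr (1 - w) * t powr w"
    using t by (simp add: powr_divide powr_diff)
  ultimately show ?thesis unfolding t_def[symmetric] by (simp add: algebra_simps)
qed

lemma k_case_i:
  fixes s x w :: real
  assumes "0 < s" "s \<le> 1" "s/2 \<le> x" "x \<le> s" "0 < w" "w < 1"
  shows "s powr w - s \<le> 2 * (x powr w - x)"
proof -
  have xp: "0 < x" using assms by simp
  have m: "s powr (w - 1) \<le> x powr (w - 1)" using assms xp by (intro powr_mono2') auto
  have one: "1 \<le> s powr (w - 1)"
    using powr_mono2'[of "w - 1" s 1] assms by simp
  have ex: "x powr w - x = x * (x powr (w - 1) - 1)" using xp
    by (simp add: algebra_simps powr_diff)
  have es: "s powr w - s = s * (s powr (w - 1) - 1)" using assms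
    by (simp add: algebra_simps powr_diff)
  have "s * (s powr (w - 1) - 1) \<le> 2 * x * (s powr (w - 1) - 1)"
    using assms one by (intro mult_right_mono) auto
  also have "\<dots> \<le> 2 * x * (x powr (w - 1) - 1)" using m xp by (intro mult_left_mono) auto
  finally show ?thesis using ex es by simp
qed

lemma k_case_ii:
  fixes s x w :: real
  assumes "0 \<le> s" "s \<le> 1" "s \<le> x" "x \<le> (1 + s)/2" "0 < w" "w < 1"
  shows "s powr w - s \<le> 2 * (x powr w - x)"
proof (cases "s = 1")
  case True then have "x = 1" using assms by simp
  then show ?thesis using True by simp
next
  case False
  define l where "l = (1 - x) / (1 - s)"
  have l: "1/2 \<le> l" "l \<le> 1" using assms False unfolding l_def by (auto simp: field_simps)
  have "l * (1 - s) = 1 - x" using False unfolding l_def by simp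
  then have "l - l * s = 1 - x" by (simp add: algebra_simps)
  then have xe: "x = l * s + (1 - l) * 1" by (simp add: algebra_simps)
  have c: "l * s powr w + (1 - l) * 1 powr w \<le> x powr w"
    using concave_powr[of s 1 l w] l assms xe by simp
  have sw: "s \<le> s powr w" using pow_ge_self assms by simp
  have "1 * (s powr w - s) \<le> (2 * l) * (s powr w - s)" using l sw
    by (intro mult_right_mono) auto
  then have "s powr w - s \<le> 2 * l * (s powr w - s)" by simp
  also have "\<dots> \<le> 2 * (x powr w - x)"
  proof -
    have c': "l * s powr w + (1 - l) \<le> x powr w" using c by simp
    have id: "2 * (x powr w - x) - 2 * l * (s powr w - s) = 2 * (x powr w - (l * s powr w + (1 - l))) + 2 * ((l * s + (1 - l) * 1) - x)"
      by (simp add: algebra_simps)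
    have A: "0 \<le> x powr w - (l * s powr w + (1 - l))" using c' by simp
    have B: "(l * s + (1 - l) * 1) - x = 0" using xe by simp
    have "0 \<le> 2 * (x powr w - (l * s powr w + (1 - l))) + 2 * ((l * s + (1 - l) * 1) - x)"
      using A B by simp
    then have "0 \<le> 2 * (x powr w - x) - 2 * l * (s powr w - s)" unfolding id .
    then show ?thesis by simp
  qed
  finally show ?thesis .
qed

lemma kx:
  fixes s x w :: real
  assumes "0 \<le> s" "s \<le> 1" "(1 - s)/2 \<le> x" "x \<le> (1 + s)/2" "0 < w" "w < 1"
  shows "s powr w - s \<le> 2 * (x powr w - x)"
proof -
  consider "s \<le> x" | "s/2 \<le> x" "x < s" | "x < s/2" by linarith
  then show ?thesis
  proof cases
    case 1 then show ?thesis using k_case_ii assms by blast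
  next
    case 2 then show ?thesis using k_case_i[of s x w] assms by simp
  next
    case 3
    have s2: "1/2 < s" using 3 assms by simp
    define x0 where "x0 = (1 - s)/2"
    define x1 where "x1 = s/2"
    define l where "l = (x1 - x) / (x1 - x0)"
    have x01: "x0 < x1" using s2 unfolding x0_def x1_def by simp
    have l: "0 \<le> l" "l \<le> 1" using 3 assms x01 unfolding l_def x0_def[symmetric] x1_def[symmetric]
      by (auto simp: field_simps)
    have "l * (x1 - x0) = x1 - x" using x01 unfolding l_def by simp
    then have "l * x1 - l * x0 = x1 - x" by (simp add: algebra_simps)
    then have xe: "x = l * x0 + (1 - l) * x1" by (simp add: algebra_simps)
    have x0p: "0 \<le> x0" using assms unfolding x0_def by simp
    have c: "l * x0 powr w + (1 - l) * x1 powr w \<le> x powr w"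
      using concave_powr[of x0 x1 l w] l assms xe x0p x01 by simp
    have k0: "s powr w - s \<le> 2 * (x0 powr w - x0)" using kF[of s w] s2 assms unfolding x0_def by simp
    have k1: "s powr w - s \<le> 2 * (x1 powr w - x1)" using k_case_i[of s x1 w] s2 assms unfolding x1_def by simp
    have "s powr w - s = l * (s powr w - s) + (1 - l) * (s powr w - s)" by (simp add: algebra_simps)
    also have "\<dots> \<le> l * (2 * (x0 powr w - x0)) + (1 - l) * (2 * (x1 powr w - x1))"
      using k0 k1 l by (intro add_mono mult_left_mono) auto
    also have "\<dots> \<le> 2 * (x powr w - x)"
    proof -
      have id: "2 * (x powr w - x) - (l * (2 * (x0 powr w - x0)) + (1 - l) * (2 * (x1 powr w - x1)))
          = 2 * (x powr w - (l * x0 powr w + (1 - l) * x1 powr w)) + 2 * ((l * x0 + (1 - l) * x1) - x)"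
        by (simp add: algebra_simps)
      have A: "0 \<le> x powr w - (l * x0 powr w + (1 - l) * x1 powr w)" using c by simp
      have B: "(l * x0 + (1 - l) * x1) - x = 0" using xe by simp
      have "0 \<le> 2 * (x powr w - (l * x0 powr w + (1 - l) * x1 powr w)) + 2 * ((l * x0 + (1 - l) * x1) - x)"
        using A B by simp
      then have "0 \<le> 2 * (x powr w - x) - (l * (2 * (x0 powr w - x0)) + (1 - l) * (2 * (x1 powr w - x1)))"
        unfolding id .
      then show ?thesis by simp
    qed
    finally show ?thesis .
  qed
qed

lemma holder_scalar:
  fixes s d w :: real
  assumes "0 \<le> s" "s \<le> 1" "1 - s \<le> d" "d \<le> 1 + s" "0 < w" "w < 1"
  shows "d - s + s powr w \<le> 2 powr (1 - w) * d powr w"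
proof -
  have k: "s powr w - s \<le> 2 * ((d/2) powr w - d/2)" using kx[of s "d/2" w] assms by simp
  have "2 * (d/2) powr w = 2 powr (1 - w) * d powr w"
    using assms by (simp add: powr_divide powr_diff)
  then show ?thesis using k by (simp add: algebra_simps)
qed

definition snow :: "real \<Rightarrow> 'a::real_normed_vector \<Rightarrow> 'a" where
  "snow w v = norm v powr (w - 1) *\<^sub>R v"

lemma norm_snow: "0 < w \<Longrightarrow> norm (snow w v) = norm v powr w"
proof (cases "v = 0")
  case True then show ?thesis by (simp add: snow_def)
next
  case False
  then have "norm v powr (w - 1) * norm v = norm v powr w"
    using powr_add[of "norm v" "w - 1" 1] by simp
  then show ?thesis by (simp add: snow_def)
qed

lemma eta_facts:
  fixes p w :: real
  assumes "0 < p" "0 < w" "w < 1"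
  shows "\<And>s. 0 \<le> s \<Longrightarrow> s < 1 \<Longrightarrow> eta p w \<le> (1 - s powr w) / (1 - s) * (1 + s powr (p * w)) powr ((1 - w) / (p * w))"
    and "w \<le> eta p w" and "eta p w \<le> 1"
proof -
  define g where "g s = (1 - s powr w) / (1 - s) * (1 + s powr (p * w)) powr ((1 - w) / (p * w))" for s :: real
  have gw: "w \<le> g s" if "0 \<le> s" "s < 1" for s
  proof -
    have "s powr w \<le> 1 - w * (1 - s)" using bernoulli_powr[of "1 - s" w] that assms by simp
    then have a: "w \<le> (1 - s powr w) / (1 - s)" using that by (simp add: field_simps)
    have b: "1 \<le> (1 + s powr (p * w)) powr ((1 - w) / (p * w))"
      using assms by (intro ge_one_powr_ge_zero) auto
    have "w * 1 \<le> (1 - s powr w) / (1 - s) * (1 + s powr (p * w)) powr ((1 - w) / (p * w))"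
      using a b assms by (intro mult_mono) auto
    then show ?thesis unfolding g_def by simp
  qed
  have bdd: "bdd_below (g ` {0..<1})" using gw by (intro bdd_belowI[of _ w]) auto
  have e: "eta p w = (INF s\<in>{0..<1}. g s)" unfolding eta_def g_def by simp
  show "\<And>s. 0 \<le> s \<Longrightarrow> s < 1 \<Longrightarrow> eta p w \<le> (1 - s powr w) / (1 - s) * (1 + s powr (p * w)) powr ((1 - w) / (p * w))"
  proof -
    fix s :: real assume "0 \<le> s" "s < 1"
    then have "eta p w \<le> g s" unfolding e using bdd by (intro cINF_lower) auto
    then show "eta p w \<le> (1 - s powr w) / (1 - s) * (1 + s powr (p * w)) powr ((1 - w) / (p * w))"
      unfolding g_def .
  qed
  show "w \<le> eta p w" unfolding e using gw by (intro cINF_greatest) auto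
  have "eta p w \<le> g 0" unfolding e using bdd by (intro cINF_lower) auto
  then show "eta p w \<le> 1" unfolding g_def using assms by simp
qed

lemma holder_vec_aux:
  fixes a b :: "'a::real_normed_vector"
  assumes "0 < w" "w < 1" "norm b \<le> norm a"
  shows "norm (snow w a - snow w b) \<le> 2 powr (1 - w) * norm (a - b) powr w"
proof (cases "b = 0")
  case True
  have "1 \<le> (2::real) powr (1 - w)" using assms by (intro ge_one_powr_ge_zero) auto
  then have "1 * norm a powr w \<le> 2 powr (1 - w) * norm a powr w" by (intro mult_right_mono) auto
  moreover have "snow w b = 0" using True by (simp add: snow_def)
  ultimately show ?thesis using True assms norm_snow[of w a] by simp
next
  case False
  define r where "r = norm a"
  define s where "s = norm b"
  define d where "d = norm (a - b)"
  have s0: "0 < s" using False unfolding s_def by simp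
  have r0: "0 < r" using s0 assms unfolding r_def s_def by linarith
  have sr: "s \<le> r" using assms unfolding r_def s_def by simp
  have d1: "r - s \<le> d" unfolding r_def s_def d_def by (metis norm_triangle_ineq2)
  have d2: "d \<le> r + s" unfolding r_def s_def d_def by (metis norm_triangle_ineq4)
  have mono: "r powr (w - 1) \<le> s powr (w - 1)" using s0 sr assms by (intro powr_mono2') auto
  have eq: "snow w a - snow w b = r powr (w - 1) *\<^sub>R (a - b) - (s powr (w - 1) - r powr (w - 1)) *\<^sub>R b"
    unfolding snow_def r_def s_def by (simp add: algebra_simps)
  have "norm (snow w a - snow w b) \<le> norm (r powr (w - 1) *\<^sub>R (a - b)) + norm ((s powr (w - 1) - r powr (w - 1)) *\<^sub>R b)"
    unfolding eq by (rule norm_triangle_ineq4)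
  also have "\<dots> = r powr (w - 1) * d + (s powr (w - 1) - r powr (w - 1)) * s"
    using mono unfolding d_def s_def by simp
  also have "\<dots> = r powr w * (d / r - s / r + (s / r) powr w)"
  proof -
    have "r powr (w - 1) = r powr w / r" using r0 by (simp add: powr_diff)
    moreover have "s powr (w - 1) * s = s powr w" using s0 powr_add[of s "w - 1" 1] by simp
    moreover have "r powr w * (s / r) powr w = s powr w" using r0 s0 by (simp add: powr_divide)
    ultimately show ?thesis using r0 by (simp add: field_simps)
  qed
  also have "\<dots> \<le> r powr w * (2 powr (1 - w) * (d / r) powr w)"
  proof -
    have "d / r - s / r + (s / r) powr w \<le> 2 powr (1 - w) * (d / r) powr w"
    proof (rule holder_scalar)
      show "0 \<le> s / r" using s0 r0 by simp
      show "s / r \<le> 1" using sr r0 by simp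
      show "1 - s / r \<le> d / r" using divide_right_mono[OF d1, of r] r0 by (simp add: diff_divide_distrib)
      show "d / r \<le> 1 + s / r" using divide_right_mono[OF d2, of r] r0 by (simp add: add_divide_distrib)
    qed (use assms in auto)
    then show ?thesis using r0 by (intro mult_left_mono) auto
  qed
  also have "\<dots> = 2 powr (1 - w) * d powr w" using r0 by (simp add: powr_divide)
  finally show ?thesis unfolding d_def .
qed

lemma holder_vec:
  fixes a b :: "'a::real_normed_vector"
  assumes "0 < w" "w < 1"
  shows "norm (snow w a - snow w b) \<le> 2 powr (1 - w) * norm (a - b) powr w"
proof (cases "norm b \<le> norm a")
  case True then show ?thesis using holder_vec_aux assms by blast
next
  case False
  then have "norm (snow w b - snow w a) \<le> 2 powr (1 - w) * norm (b - a) powr w"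
    using holder_vec_aux assms by (metis linear)
  then show ?thesis by (simp add: norm_minus_commute)
qed

lemma lower_vec_aux:
  fixes a b :: "'a::real_normed_vector"
  assumes p: "0 < p" and w: "0 < w" "w < 1" and ba: "norm b \<le> norm a"
  shows "eta p w * norm (a - b) \<le> norm (snow w a - snow w b) *
           (norm a powr (p * w) + norm b powr (p * w)) powr ((1 - w) / (p * w))"
proof -
  define e where "e = eta p w"
  define q where "q = (1 - w) / (p * w)"
  have e: "w \<le> e" "e \<le> 1" using eta_facts[OF p w] unfolding e_def by auto
  have q0: "0 \<le> q" using p w unfolding q_def by simp
  have pwq: "p * w * q = 1 - w" using p w unfolding q_def by simp
  define r where "r = norm a"
  define s where "s = norm b"
  define d where "d = norm (a - b)"
  have rpq: "(r powr (p * w)) powr q = r powr (1 - w)" by (simp add: powr_powr pwq)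
  show ?thesis
  proof (cases "b = 0")
    case True
    show ?thesis
    proof (cases "a = 0")
      case True then show ?thesis using \<open>b = 0\<close> by simp
    next
      case False
      then have r0: "0 < r" unfolding r_def by simp
      have "norm (snow w a - snow w b) = r powr w" using True norm_snow[OF w(1), of a]
        unfolding r_def by (simp add: snow_def)
      moreover have "(norm a powr (p * w) + norm b powr (p * w)) powr ((1 - w) / (p * w)) = r powr (1 - w)"
        using True rpq unfolding r_def q_def by simp
      moreover have "r powr w * r powr (1 - w) = r" using r0 by (simp flip: powr_add)
      moreover have "e * r \<le> r" using e r0 by simp
      ultimately show ?thesis using True unfolding e_def r_def by simp
    qed
  next
    case False
    have s0: "0 < s" using False unfolding s_def by simp
    have sr: "s \<le> r" using ba unfolding r_def s_def by simp
    have r0: "0 < r" using s0 sr by linarith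
    show ?thesis
    proof (cases "s = r")
      case True
      have eq: "snow w a - snow w b = r powr (w - 1) *\<^sub>R (a - b)"
        unfolding snow_def using True unfolding r_def s_def by (simp add: algebra_simps)
      have Nq: "(norm a powr (p * w) + norm b powr (p * w)) powr ((1 - w) / (p * w)) = 2 powr q * r powr (1 - w)"
      proof -
        have "norm a powr (p * w) + norm b powr (p * w) = 2 * r powr (p * w)"
          using True unfolding r_def s_def by simp
        then show ?thesis using rpq unfolding q_def[symmetric] by (simp add: powr_mult)
      qed
      have rr: "r powr (w - 1) * r powr (1 - w) = 1" using r0 by (simp flip: powr_add)
      have ph: "norm (snow w a - snow w b) = r powr (w - 1) * d" unfolding eq d_def by simp
      have "norm (snow w a - snow w b) * (2 powr q * r powr (1 - w)) = 2 powr q * d * (r powr (w - 1) * r powr (1 - w))"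
        unfolding ph by (simp only: mult_ac)
      then have F1: "norm (snow w a - snow w b) * (2 powr q * r powr (1 - w)) = 2 powr q * d"
        using rr by simp
      have F2: "e * d \<le> 1 * d" using e unfolding d_def by (intro mult_right_mono) auto
      have F3: "1 * d \<le> 2 powr q * d" using q0 unfolding d_def
        by (intro mult_right_mono ge_one_powr_ge_zero) auto
      show ?thesis unfolding Nq e_def[symmetric] d_def[symmetric] F1 using F2 F3 by linarith
    next
      case False
      define \<sigma> where "\<sigma> = s / r"
      have \<sigma>: "0 < \<sigma>" "\<sigma> < 1" using s0 r0 sr False unfolding \<sigma>_def by auto
      have s_eq: "s = r * \<sigma>" using r0 unfolding \<sigma>_def by simp
      define E where "E = norm (a - \<sigma> powr (w - 1) *\<^sub>R b)"
      have spow: "s powr (w - 1) = r powr (w - 1) * \<sigma> powr (w - 1)"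
        using r0 \<sigma> unfolding s_eq by (simp add: powr_mult)
      have eq: "snow w a - snow w b = r powr (w - 1) *\<^sub>R (a - \<sigma> powr (w - 1) *\<^sub>R b)"
        unfolding snow_def r_def[symmetric] s_def[symmetric] spow by (simp add: algebra_simps)
      have Phi: "norm (snow w a - snow w b) = r powr (w - 1) * E"
        unfolding eq E_def by simp
      have sig1: "1 \<le> \<sigma> powr (w - 1)" using powr_mono2'[of "w - 1" \<sigma> 1] \<sigma> w by simp
      have sigw: "\<sigma> powr (w - 1) * \<sigma> = \<sigma> powr w" using \<sigma> powr_add[of \<sigma> "w - 1" 1] by simp
      have nb: "norm b = r * \<sigma>" using s_eq unfolding s_def by simp
      have E1: "r - r * \<sigma> powr w \<le> E"
      proof -
        have "norm a - norm (\<sigma> powr (w - 1) *\<^sub>R b) \<le> E" unfolding E_def by (rule norm_triangle_ineq2)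
        moreover have "norm (\<sigma> powr (w - 1) *\<^sub>R b) = r * \<sigma> powr w"
        proof -
          have "norm (\<sigma> powr (w - 1) *\<^sub>R b) = \<sigma> powr (w - 1) * (r * \<sigma>)" using nb by simp
          also have "\<dots> = r * (\<sigma> powr (w - 1) * \<sigma>)" by (simp only: mult_ac)
          finally show ?thesis by (simp only: sigw)
        qed
        ultimately show ?thesis unfolding r_def by simp
      qed
      have E2: "d \<le> E + r * (\<sigma> powr w - \<sigma>)"
      proof -
        have "a - b = (a - \<sigma> powr (w - 1) *\<^sub>R b) + (\<sigma> powr (w - 1) - 1) *\<^sub>R b" by (simp add: algebra_simps)
        then have "d \<le> E + norm ((\<sigma> powr (w - 1) - 1) *\<^sub>R b)"
          unfolding d_def E_def by (metis norm_triangle_ineq)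
        moreover have "norm ((\<sigma> powr (w - 1) - 1) *\<^sub>R b) = r * (\<sigma> powr w - \<sigma>)"
        proof -
          have "norm ((\<sigma> powr (w - 1) - 1) *\<^sub>R b) = (\<sigma> powr (w - 1) - 1) * (r * \<sigma>)" using nb sig1 by simp
          also have "\<dots> = r * (\<sigma> powr (w - 1) * \<sigma>) - r * \<sigma>" by (simp add: algebra_simps)
          finally have "norm ((\<sigma> powr (w - 1) - 1) *\<^sub>R b) = r * (\<sigma> powr (w - 1) * \<sigma>) - r * \<sigma>" .
          then show ?thesis unfolding sigw by (simp add: right_diff_distrib)
        qed
        ultimately show ?thesis by simp
      qed
      have sw: "\<sigma> \<le> \<sigma> powr w" using pow_ge_self[of \<sigma> w] \<sigma> w by simp
      have sw1: "\<sigma> powr w \<le> 1" using \<sigma> w by (intro powr_le1) auto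
      have key: "(1 - \<sigma> powr w) * d \<le> (1 - \<sigma>) * E"
      proof -
        have "(1 - \<sigma> powr w) * d \<le> (1 - \<sigma> powr w) * (E + r * (\<sigma> powr w - \<sigma>))"
          using E2 sw1 by (intro mult_left_mono) auto
        also have "\<dots> = (1 - \<sigma> powr w) * E + (r - r * \<sigma> powr w) * (\<sigma> powr w - \<sigma>)"
          by (simp add: algebra_simps)
        also have "\<dots> \<le> (1 - \<sigma> powr w) * E + E * (\<sigma> powr w - \<sigma>)"
          using E1 sw by (intro add_left_mono mult_right_mono) auto
        also have "\<dots> = (1 - \<sigma>) * E" by (simp add: algebra_simps)
        finally show ?thesis .
      qed
      define k where "k = (1 - \<sigma> powr w) / (1 - \<sigma>)"
      have kd: "k * d \<le> E" using key \<sigma> unfolding k_def by (simp add: field_simps)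
      have N: "norm a powr (p * w) + norm b powr (p * w) = r powr (p * w) * (1 + \<sigma> powr (p * w))"
        using r0 \<sigma> unfolding r_def[symmetric] s_def[symmetric] s_eq by (simp add: powr_mult algebra_simps)
      have Nq: "(norm a powr (p * w) + norm b powr (p * w)) powr ((1 - w) / (p * w))
          = r powr (1 - w) * (1 + \<sigma> powr (p * w)) powr q"
        unfolding N q_def[symmetric] using rpq r0 by (simp add: powr_mult)
      have rr: "r powr (w - 1) * r powr (1 - w) = 1" using r0 by (simp flip: powr_add)
      have "norm (snow w a - snow w b) * (norm a powr (p * w) + norm b powr (p * w)) powr ((1 - w) / (p * w))
          = E * (1 + \<sigma> powr (p * w)) powr q"
        unfolding Phi Nq using rr by (simp add: algebra_simps)
      moreover have "e \<le> k * (1 + \<sigma> powr (p * w)) powr q"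
        using eta_facts(1)[OF p w, of \<sigma>] \<sigma> unfolding e_def k_def q_def by simp
      moreover have "k * (1 + \<sigma> powr (p * w)) powr q * d \<le> E * (1 + \<sigma> powr (p * w)) powr q"
      proof -
        have "(k * d) * (1 + \<sigma> powr (p * w)) powr q \<le> E * (1 + \<sigma> powr (p * w)) powr q"
          using kd by (intro mult_right_mono) auto
        then show ?thesis by (simp only: mult_ac)
      qed
      ultimately show ?thesis unfolding e_def[symmetric] d_def[symmetric]
        by (smt (verit) mult_right_mono norm_ge_zero d_def)
    qed
  qed
qed

lemma lower_vec:
  fixes a b :: "'a::real_normed_vector"
  assumes p: "0 < p" and w: "0 < w" "w < 1"
  shows "eta p w * norm (a - b) \<le> norm (snow w a - snow w b) *
           (norm a powr (p * w) + norm b powr (p * w)) powr ((1 - w) / (p * w))"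
proof (cases "norm b \<le> norm a")
  case True then show ?thesis using lower_vec_aux[OF assms] by blast
next
  case False
  then have "eta p w * norm (b - a) \<le> norm (snow w b - snow w a) *
           (norm b powr (p * w) + norm a powr (p * w)) powr ((1 - w) / (p * w))"
    using lower_vec_aux[OF assms, of a b] by simp
  then show ?thesis by (simp add: norm_minus_commute add.commute)
qed

lemma nn_integral_add_le_meas:
  assumes h: "h \<in> borel_measurable M"
  shows "(\<integral>\<^sup>+ x. F x + h x \<partial>M) \<le> integral\<^sup>N M F + integral\<^sup>N M h"
proof -
  have "integral\<^sup>S M g \<le> integral\<^sup>N M F + integral\<^sup>N M h"
    if g: "simple_function M g" "g \<le> (\<lambda>x. F x + h x)" for g
  proof -
    have gm: "g \<in> borel_measurable M" using g(1) by (rule borel_measurable_simple_function)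
    have "integral\<^sup>S M g = integral\<^sup>N M g" using nn_integral_eq_simple_integral[OF g(1)] by simp
    also have "\<dots> \<le> (\<integral>\<^sup>+ x. (if h x = \<top> then 0 else g x - h x) + h x \<partial>M)"
    proof (intro nn_integral_mono)
      fix x show "g x \<le> (if h x = \<top> then 0 else g x - h x) + h x"
        by (cases "h x \<le> g x") (auto simp: diff_add_self_ennreal not_le intro: less_imp_le)
    qed
    also have "\<dots> = (\<integral>\<^sup>+ x. (if h x = \<top> then 0 else g x - h x) \<partial>M) + integral\<^sup>N M h"
    proof (rule nn_integral_add)
      note gm[measurable] h[measurable]
      show "(\<lambda>x. if h x = \<top> then 0 else g x - h x) \<in> borel_measurable M" by measurable
    qed (rule h)
    also have "(\<integral>\<^sup>+ x. (if h x = \<top> then 0 else g x - h x) \<partial>M) \<le> integral\<^sup>N M F"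
    proof (intro nn_integral_mono)
      fix x have "g x \<le> F x + h x" using g(2) by (simp add: le_fun_def)
      then show "(if h x = \<top> then 0 else g x - h x) \<le> F x" by (cases "h x = \<top>") (auto simp: ennreal_minus_le_iff add.commute)
    qed
    finally show ?thesis by (simp add: add_right_mono)
  qed
  then show ?thesis unfolding nn_integral_def[of M "\<lambda>x. F x + h x"]
    by (intro SUP_least) auto
qed

lemma nn_integral_cmult_le:
  fixes c :: ennreal
  assumes "c < \<infinity>"
  shows "(\<integral>\<^sup>+ x. c * F x \<partial>M) \<le> c * integral\<^sup>N M F"
proof (cases "c = 0")
  case True then show ?thesis by simp
next
  case False
  have "integral\<^sup>S M g \<le> c * integral\<^sup>N M F"
    if g: "simple_function M g" "g \<le> (\<lambda>x. c * F x)" for g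
  proof -
    have gm: "g \<in> borel_measurable M" using g(1) by (rule borel_measurable_simple_function)
    have "integral\<^sup>S M g = integral\<^sup>N M g" using nn_integral_eq_simple_integral[OF g(1)] by simp
    also have "\<dots> = (\<integral>\<^sup>+ x. c * (g x / c) \<partial>M)"
    proof (intro nn_integral_cong)
      fix x
      have "c * (g x / c) = c * g x / c" by (rule ennreal_times_divide)
      also have "\<dots> = g x * c / c" by (simp only: mult.commute)
      also have "\<dots> = g x" using False assms by (intro mult_divide_eq_ennreal) auto
      finally show "g x = c * (g x / c)" by (rule sym)
    qed
    also have "\<dots> = c * (\<integral>\<^sup>+ x. (g x / c) \<partial>M)"
    proof (rule nn_integral_cmult)
      note gm[measurable]
      show "(\<lambda>x. g x / c) \<in> borel_measurable M" by measurable
    qed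
    also have "(\<integral>\<^sup>+ x. (g x / c) \<partial>M) \<le> integral\<^sup>N M F"
    proof (intro nn_integral_mono)
      fix x have "g x \<le> c * F x" using g(2) by (simp add: le_fun_def)
      moreover have "0 < c" using False by (simp add: zero_less_iff_neq_zero)
      ultimately show "g x / c \<le> F x" by (intro divide_le_posI_ennreal)
    qed
    finally show ?thesis by (simp add: mult_left_mono)
  qed
  then show ?thesis unfolding nn_integral_def[of M "\<lambda>x. c * F x"]
    by (intro SUP_least) auto
qed

lemma snow_cont:
  assumes "0 < w" "w < 1"
  shows "continuous_on UNIV (snow w :: 'a::real_normed_vector \<Rightarrow> 'a)"
proof -
  have "isCont (snow w) v0" for v0 :: 'a
  proof -
    have "((\<lambda>v. snow w v - snow w v0) \<longlongrightarrow> 0) (at v0)"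
    proof (rule Lim_null_comparison)
      show "\<forall>\<^sub>F v in at v0. norm (snow w v - snow w v0) \<le> 2 powr (1 - w) * norm (v - v0) powr w"
        by (intro always_eventually allI) (rule holder_vec[OF assms])
      have "((\<lambda>v. v - v0) \<longlongrightarrow> 0) (at v0)" by (rule LIM_zero) (rule tendsto_ident_at)
      then have "((\<lambda>v. norm (v - v0)) \<longlongrightarrow> 0) (at v0)" by (rule tendsto_norm_zero)
      then have "((\<lambda>v. norm (v - v0) powr w) \<longlongrightarrow> 0) (at v0)"
      proof (rule tendsto_zero_powrI)
        show "((\<lambda>v. w) \<longlongrightarrow> w) (at v0)" by (rule tendsto_const)
        show "\<forall>\<^sub>F v in at v0. 0 \<le> norm (v - v0)" by (intro always_eventually allI) simp
      qed (use assms in auto)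
      then show "((\<lambda>v. 2 powr (1 - w) * norm (v - v0) powr w) \<longlongrightarrow> 0) (at v0)"
        by (rule tendsto_mult_right_zero)
    qed
    then show ?thesis unfolding isCont_def by (rule LIM_zero_cancel)
  qed
  then show ?thesis by (simp add: continuous_on_eq_continuous_at)
qed

lemma meas_norm_powr:
  fixes g :: "'a::real_normed_vector \<Rightarrow> 'b::real_normed_vector"
  assumes "sets M = sets borel" "continuous_on UNIV g" "0 < r"
  shows "(\<lambda>y. ennreal (norm (g y) powr r)) \<in> borel_measurable M"
proof -
  have "continuous_on UNIV (\<lambda>y. norm (g y) powr r)"
    using assms by (intro continuous_on_powr' continuous_intros) auto
  then have "(\<lambda>y. norm (g y) powr r) \<in> borel_measurable borel" by (rule borel_measurable_continuous_onI)
  then have "(\<lambda>y. norm (g y) powr r) \<in> borel_measurable M"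
    using measurable_cong_sets[OF assms(1) refl] by blast
  then show ?thesis by measurable
qed

lemma young_point:
  fixes p w L dd P N :: real
  assumes "0 < p" "0 < w" "w < 1" "0 < L" "0 \<le> dd" "0 \<le> P" "0 \<le> N"
    and h: "L * dd \<le> P * N powr ((1 - w) / (p * w))"
  shows "dd powr (p * w) \<le> w * P powr p + (1 - w) * (L powr (- (p * w) / (1 - w)) * N)"
proof -
  define q where "q = (1 - w) / (p * w)"
  have pw: "0 < p * w" using assms by simp
  have "dd \<le> P * N powr q / L" using h assms unfolding q_def by (simp add: field_simps)
  then have "dd powr (p * w) \<le> (P * N powr q / L) powr (p * w)"
    using assms pw by (intro powr_mono2) auto
  also have "\<dots> = P powr (p * w) * N powr (1 - w) * L powr (- (p * w))"
  proof -
    have qq: "q * (p * w) = 1 - w" using assms unfolding q_def by simp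
    have "(P * N powr q / L) powr (p * w) = (P * N powr q) powr (p * w) / L powr (p * w)"
      using assms by (simp add: powr_divide)
    also have "\<dots> = P powr (p * w) * (N powr q) powr (p * w) / L powr (p * w)"
      using assms by (simp add: powr_mult)
    also have "(N powr q) powr (p * w) = N powr (1 - w)" by (simp add: powr_powr qq)
    also have "L powr (- (p * w)) = 1 / L powr (p * w)" by (simp add: powr_minus_divide)
    ultimately show ?thesis by simp
  qed
  also have "\<dots> = (P powr p) powr w * (L powr (- (p * w) / (1 - w)) * N) powr (1 - w)"
    using assms by (simp add: powr_mult powr_powr mult.commute mult.left_commute)
  also have "\<dots> \<le> w * P powr p + (1 - w) * (L powr (- (p * w) / (1 - w)) * N)"
    using assms by (intro young0) auto
  finally show ?thesis .
qed

lemma snow_cont_comp[continuous_intros]: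
  fixes f :: "'b::topological_space \<Rightarrow> 'a::real_normed_vector"
  assumes "0 < w" "w < 1" "continuous_on S f"
  shows "continuous_on S (\<lambda>x. snow w (f x))"
  using continuous_on_compose2[OF snow_cont[OF assms(1,2)] assms(3)] by simp

lemma ennreal_comb:
  fixes a b X Y Z :: real
  assumes "0 \<le> a" "0 \<le> b" "0 \<le> X" "0 \<le> Y" "0 \<le> Z"
  shows "ennreal (a * X + b * (Y + Z)) = ennreal a * ennreal X + ennreal b * (ennreal Y + ennreal Z)"
  using assms by (simp add: ennreal_plus ennreal_mult)

lemma exists_pos_ball:
  fixes z :: "'a::real_normed_vector"
  assumes "prob_space M" "sets M = sets borel"
  shows "\<exists>R::nat. 0 < emeasure M {y. norm (y - z) \<le> real R}"
proof (rule ccontr)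
  assume "\<not> ?thesis"
  then have z: "\<And>R::nat. emeasure M {y. norm (y - z) \<le> real R} = 0" by auto
  have sp: "space M = UNIV" using sets_eq_imp_space_eq[OF assms(2)] by simp
  have meas: "\<And>R::nat. {y. norm (y - z) \<le> real R} \<in> sets M"
  proof -
    fix R :: nat
    have "closed {y. norm (y - z) \<le> real R}" by (intro closed_Collect_le continuous_intros)
    then show "{y. norm (y - z) \<le> real R} \<in> sets M" unfolding assms(2) by simp
  qed
  have U: "(\<Union>R::nat. {y. norm (y - z) \<le> real R}) = space M"
    unfolding sp using real_arch_simple by blast
  have "emeasure M (\<Union>R::nat. {y. norm (y - z) \<le> real R}) = 0"
    using z meas by (intro emeasure_UN_eq_0) auto
  then show False using U prob_space.emeasure_space_1[OF assms(1)] by simp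
qed

theorem proposition5p6:
  fixes p \<omega> D :: real
  assumes "p > 0" and "0 < \<omega>" and "\<omega> < 1"
    and "D > 2 powr ((1 - \<omega>) * (1 + 1 / (p * \<omega>))) / eta p \<omega>"
  shows "\<forall>M :: ('a::banach) measure. prob_space M \<and> sets M = sets borel \<longrightarrow>
    (\<exists>f :: 'a \<Rightarrow> 'a.
       (\<forall>x y. norm (f x - f y) \<le> D * norm (x - y) powr \<omega>) \<and>
       (\<integral>\<^sup>+ x. \<integral>\<^sup>+ y. ennreal (norm (f x - f y) powr p) \<partial>M \<partial>M)
         \<ge> (\<integral>\<^sup>+ x. \<integral>\<^sup>+ y. ennreal (norm (x - y) powr (p * \<omega>)) \<partial>M \<partial>M))"
proof (intro allI impI)
  fix M :: "'a measure"
  assume MM: "prob_space M \<and> sets M = sets borel"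
  then have P: "prob_space M" and S: "sets M = sets borel" by auto
  have sp: "space M = UNIV" using sets_eq_imp_space_eq[OF S] by simp
  have one: "emeasure M (space M) = 1" using prob_space.emeasure_space_1[OF P] .
  have int_const: "\<And>c. (\<integral>\<^sup>+ x. c \<partial>M) = c" using one by simp
  define w where "w = \<omega>"
  have p: "0 < p" and w: "0 < w" "w < 1" using assms unfolding w_def by auto
  define e where "e = eta p w"
  have e: "w \<le> e" "e \<le> 1" using eta_facts[OF p w] unfolding e_def by auto
  have e0: "0 < e" using e w by simp
  have T: "2 powr ((1 - w) * (1 + 1 / (p * w))) = 2 powr (1 - w) * 2 powr ((1 - w) / (p * w))"
    by (simp add: powr_add[symmetric] algebra_simps)
  define lam where "lam = D / 2 powr (1 - w)"
  define L where "L = lam * e"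
  have DT: "2 powr (1 - w) * 2 powr ((1 - w) / (p * w)) / e < D"
    using assms(4) T unfolding w_def e_def by simp
  then have "2 powr (1 - w) * 2 powr ((1 - w) / (p * w)) < D * e"
    using e0 by (simp add: divide_less_eq)
  then have Lgt: "2 powr ((1 - w) / (p * w)) < L"
    unfolding L_def lam_def by (simp add: field_simps)
  have L0: "0 < L" using Lgt by (smt (verit) powr_ge_zero)
  have lam0: "0 < lam" using L0 e0 unfolding L_def by (simp add: zero_less_mult_iff)
  have Dlam: "D = lam * 2 powr (1 - w)" unfolding lam_def by simp
  define rho where "rho = L powr (- (p * w) / (1 - w))"
  have rho0: "0 < rho" unfolding rho_def using L0 by simp
  have rho2: "2 * rho < 1"
  proof -
    have ex: "0 < p * w / (1 - w)" using p w by simp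
    have "(2 powr ((1 - w) / (p * w))) powr (p * w / (1 - w)) < L powr (p * w / (1 - w))"
      using Lgt ex by (intro powr_less_mono2) auto
    moreover have "(2 powr ((1 - w) / (p * w))) powr (p * w / (1 - w)) = 2"
      using p w by (simp add: powr_powr)
    moreover have "rho = 1 / L powr (p * w / (1 - w))"
      unfolding rho_def using L0 by (simp add: powr_minus_divide)
    ultimately have X: "2 < L powr (p * w / (1 - w))" "rho * L powr (p * w / (1 - w)) = 1"
      using L0 by auto
    have "rho * 2 < rho * L powr (p * w / (1 - w))" using X(1) rho0 by (intro mult_strict_left_mono) auto
    then show ?thesis using X(2) by simp
  qed
  define f where "f z x = lam *\<^sub>R snow w (x - z)" for z x :: 'a
  define G where "G z x = ennreal (norm (x - z) powr (p * w))" for z x :: 'a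
  define C where "C z = (\<integral>\<^sup>+ x. G z x \<partial>M)" for z
  define F where "F z x y = ennreal (norm (f z x - f z y) powr p)" for z x y
  define A where "A z = (\<integral>\<^sup>+ x. \<integral>\<^sup>+ y. F z x y \<partial>M \<partial>M)" for z
  define B where "B = (\<integral>\<^sup>+ x. \<integral>\<^sup>+ y. ennreal (norm (x - y) powr (p * w)) \<partial>M \<partial>M)"
  have holder: "norm (f z x - f z y) \<le> D * norm (x - y) powr w" for z x y
  proof -
    have "norm (f z x - f z y) = lam * norm (snow w (x - z) - snow w (y - z))"
      unfolding f_def using lam0 by (simp flip: scaleR_diff_right)
    also have "\<dots> \<le> lam * (2 powr (1 - w) * norm (x - y) powr w)"
    proof -
      have "norm (snow w (x - z) - snow w (y - z)) \<le> 2 powr (1 - w) * norm (x - y) powr w"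
        using holder_vec[OF w, of "x - z" "y - z"] by simp
      then show ?thesis using lam0 by (intro mult_left_mono) auto
    qed
    also have "\<dots> = D * norm (x - y) powr w" unfolding Dlam by simp
    finally show ?thesis .
  qed
  have measG: "G z \<in> borel_measurable M" for z
    unfolding G_def using p w by (intro meas_norm_powr[OF S]) (auto intro!: continuous_intros)
  have measF: "F z x \<in> borel_measurable M" for z x
    unfolding F_def f_def using p w by (intro meas_norm_powr[OF S]) (auto intro!: continuous_intros)
  have measD: "(\<lambda>y. ennreal (norm (x - y) powr (p * w))) \<in> borel_measurable M" for x :: 'a
    using p w by (intro meas_norm_powr[OF S]) (auto intro!: continuous_intros)
  have step1: "B \<le> ennreal w * A z + ennreal ((1 - w) * rho) * (C z + C z)" for z
  proof -
    have pt: "ennreal (norm (x - y) powr (p * w)) \<le> ennreal w * F z x y + ennreal ((1 - w) * rho) * (G z x + G z y)" for x y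
    proof -
      define a where "a = x - z"
      define b where "b = y - z"
      have ab: "a - b = x - y" unfolding a_def b_def by simp
      define N where "N = norm a powr (p * w) + norm b powr (p * w)"
      define Pv where "Pv = norm (f z x - f z y)"
      have Pv: "Pv = lam * norm (snow w a - snow w b)"
        unfolding Pv_def f_def a_def b_def using lam0 by (simp flip: scaleR_diff_right)
      have lv: "e * norm (a - b) \<le> norm (snow w a - snow w b) * N powr ((1 - w) / (p * w))"
        unfolding N_def e_def using lower_vec[OF p w] .
      have "L * norm (x - y) \<le> Pv * N powr ((1 - w) / (p * w))"
      proof -
        have "L * norm (x - y) = lam * (e * norm (a - b))" unfolding L_def ab by simp
        also have "\<dots> \<le> lam * (norm (snow w a - snow w b) * N powr ((1 - w) / (p * w)))"
          using lv lam0 by (intro mult_left_mono) auto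
        also have "\<dots> = Pv * N powr ((1 - w) / (p * w))" unfolding Pv by simp
        finally show ?thesis .
      qed
      then have yp: "norm (x - y) powr (p * w) \<le> w * Pv powr p + (1 - w) * (rho * N)"
        unfolding rho_def using young_point[OF p w L0, of "norm (x - y)" Pv N] unfolding N_def Pv_def
        by simp
      have "ennreal (norm (x - y) powr (p * w)) \<le> ennreal (w * Pv powr p + ((1 - w) * rho) * (norm a powr (p * w) + norm b powr (p * w)))"
        using yp unfolding N_def by (intro ennreal_leI) (simp add: algebra_simps)
      also have "\<dots> = ennreal w * ennreal (Pv powr p) + ennreal ((1 - w) * rho) * (ennreal (norm a powr (p * w)) + ennreal (norm b powr (p * w)))"
        using w rho0 by (intro ennreal_comb) auto
      finally show ?thesis unfolding F_def G_def Pv_def a_def b_def .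
    qed
    define IF where "IF x = (\<integral>\<^sup>+ y. F z x y \<partial>M)" for x
    have inner: "(\<integral>\<^sup>+ y. ennreal (norm (x - y) powr (p * w)) \<partial>M) \<le> ennreal w * IF x + ennreal ((1 - w) * rho) * (G z x + C z)" for x
    proof -
      have "(\<integral>\<^sup>+ y. ennreal (norm (x - y) powr (p * w)) \<partial>M) \<le> (\<integral>\<^sup>+ y. ennreal w * F z x y + ennreal ((1 - w) * rho) * (G z x + G z y) \<partial>M)"
        using pt by (intro nn_integral_mono) auto
      also have "\<dots> = (\<integral>\<^sup>+ y. ennreal w * F z x y \<partial>M) + (\<integral>\<^sup>+ y. ennreal ((1 - w) * rho) * (G z x + G z y) \<partial>M)"
      proof (rule nn_integral_add)
        note measF[measurable] measG[measurable]
        show "(\<lambda>y. ennreal w * F z x y) \<in> borel_measurable M" by measurable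
        show "(\<lambda>y. ennreal ((1 - w) * rho) * (G z x + G z y)) \<in> borel_measurable M" by measurable
      qed
      also have "(\<integral>\<^sup>+ y. ennreal w * F z x y \<partial>M) = ennreal w * IF x"
        unfolding IF_def by (rule nn_integral_cmult) (rule measF)
      also have "(\<integral>\<^sup>+ y. ennreal ((1 - w) * rho) * (G z x + G z y) \<partial>M) = ennreal ((1 - w) * rho) * (\<integral>\<^sup>+ y. (G z x + G z y) \<partial>M)"
      proof (rule nn_integral_cmult)
        note measG[measurable]
        show "(\<lambda>y. G z x + G z y) \<in> borel_measurable M" by measurable
      qed
      also have "(\<integral>\<^sup>+ y. (G z x + G z y) \<partial>M) = (\<integral>\<^sup>+ y. G z x \<partial>M) + (\<integral>\<^sup>+ y. G z y \<partial>M)"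
        by (rule nn_integral_add) (simp, rule measG)
      also have "(\<integral>\<^sup>+ y. G z x \<partial>M) = G z x" by (rule int_const)
      finally show ?thesis unfolding C_def .
    qed
    have "B \<le> (\<integral>\<^sup>+ x. ennreal w * IF x + ennreal ((1 - w) * rho) * (G z x + C z) \<partial>M)"
      unfolding B_def using inner by (intro nn_integral_mono) auto
    also have "\<dots> \<le> (\<integral>\<^sup>+ x. ennreal w * IF x \<partial>M) + (\<integral>\<^sup>+ x. ennreal ((1 - w) * rho) * (G z x + C z) \<partial>M)"
    proof (rule nn_integral_add_le_meas)
      note measG[measurable]
      show "(\<lambda>x. ennreal ((1 - w) * rho) * (G z x + C z)) \<in> borel_measurable M" by measurable
    qed
    also have "(\<integral>\<^sup>+ x. ennreal w * IF x \<partial>M) \<le> ennreal w * A z"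
      unfolding A_def IF_def by (rule nn_integral_cmult_le) simp
    also have "(\<integral>\<^sup>+ x. ennreal ((1 - w) * rho) * (G z x + C z) \<partial>M) = ennreal ((1 - w) * rho) * (C z + C z)"
    proof -
      have "(\<integral>\<^sup>+ x. ennreal ((1 - w) * rho) * (G z x + C z) \<partial>M) = ennreal ((1 - w) * rho) * (\<integral>\<^sup>+ x. (G z x + C z) \<partial>M)"
      proof (rule nn_integral_cmult)
        note measG[measurable]
        show "(\<lambda>x. G z x + C z) \<in> borel_measurable M" by measurable
      qed
      also have "(\<integral>\<^sup>+ x. (G z x + C z) \<partial>M) = (\<integral>\<^sup>+ x. G z x \<partial>M) + (\<integral>\<^sup>+ x. C z \<partial>M)"
        by (rule nn_integral_add) (rule measG, simp)
      also have "(\<integral>\<^sup>+ x. C z \<partial>M) = C z" by (rule int_const)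
      finally show ?thesis unfolding C_def .
    qed
    finally show ?thesis by (simp add: add_right_mono)
  qed
  have tail: "C z < \<infinity>" if Afin: "A z < \<infinity>" for z
  proof -
    obtain R :: nat where R: "0 < emeasure M {y. norm (y - z) \<le> real R}"
      using exists_pos_ball[OF P S] by blast
    define SS where "SS = {y. norm (y - z) \<le> real R}"
    have SSm: "SS \<in> sets M"
    proof -
      have "closed SS" unfolding SS_def by (intro closed_Collect_le continuous_intros)
      then show ?thesis unfolding S by simp
    qed
    interpret prob_space M by (rule P)
    define q where "q = measure M SS"
    have eq: "emeasure M SS = ennreal q" unfolding q_def by (rule emeasure_eq_measure)
    have q0: "0 < q" using R eq unfolding SS_def by simp
    define c0 where "c0 = (lam / 2) powr p * q"
    have c0: "0 < c0" unfolding c0_def using lam0 q0 by simp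
    define c1 where "c1 = (2 * real R powr w) powr p"
    define IF where "IF x = (\<integral>\<^sup>+ y. F z x y \<partial>M)" for x
    have ptw: "G z x \<le> ennreal (1 / c0) * IF x + ennreal c1" for x
    proof (cases "2 * real R powr w \<le> norm (x - z) powr w")
      case True
      define t where "t = norm (x - z)"
      define K where "K = (lam / 2) powr p * t powr (p * w)"
      have K0: "0 \<le> K" unfolding K_def by simp
      have ind: "indicator SS y * ennreal K \<le> F z x y" for y
      proof (cases "y \<in> SS")
        case False then show ?thesis by simp
      next
        case True
        then have yR: "norm (y - z) \<le> real R" unfolding SS_def by simp
        have "norm (y - z) powr w \<le> real R powr w" using yR w by (intro powr_mono2) auto
        moreover have "norm (snow w (x - z)) - norm (snow w (y - z)) \<le> norm (snow w (x - z) - snow w (y - z))"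
          by (rule norm_triangle_ineq2)
        moreover have "norm (snow w (x - z)) = t powr w" unfolding t_def by (rule norm_snow[OF w(1)])
        moreover have "norm (snow w (y - z)) = norm (y - z) powr w" by (rule norm_snow[OF w(1)])
        ultimately have "t powr w - real R powr w \<le> norm (snow w (x - z) - snow w (y - z))"
          by linarith
        then have Phi: "t powr w / 2 \<le> norm (snow w (x - z) - snow w (y - z))"
          using \<open>2 * real R powr w \<le> norm (x - z) powr w\<close> unfolding t_def[symmetric] by linarith
        have fx: "norm (f z x - f z y) = lam * norm (snow w (x - z) - snow w (y - z))"
          unfolding f_def using lam0 by (simp flip: scaleR_diff_right)
        have "lam * (t powr w / 2) \<le> norm (f z x - f z y)" unfolding fx using Phi lam0 by (intro mult_left_mono) auto
        then have "(lam * (t powr w / 2)) powr p \<le> norm (f z x - f z y) powr p"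
          using lam0 p by (intro powr_mono2) auto
        moreover have "(lam * (t powr w / 2)) powr p = K"
        proof -
          have "lam * (t powr w / 2) = (lam / 2) * t powr w" by simp
          then have "(lam * (t powr w / 2)) powr p = ((lam / 2) * t powr w) powr p" by (simp only:)
          also have "\<dots> = (lam / 2) powr p * (t powr w) powr p"
            using lam0 by (intro powr_mult; simp)
          also have "(t powr w) powr p = t powr (p * w)" by (simp add: powr_powr mult.commute)
          finally show ?thesis unfolding K_def .
        qed
        ultimately have "ennreal K \<le> F z x y" unfolding F_def by (intro ennreal_leI) simp
        then show ?thesis using True by simp
      qed
      have "ennreal K * ennreal q = (\<integral>\<^sup>+ y. ennreal K * indicator SS y \<partial>M)"
        using nn_integral_cmult_indicator[OF SSm, of "ennreal K"] eq by simp
      also have "\<dots> \<le> IF x" unfolding IF_def using ind by (intro nn_integral_mono) (simp add: mult.commute)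
      finally have KI: "ennreal (K * q) \<le> IF x" using K0 q0 by (simp add: ennreal_mult)
      have "G z x = ennreal (1 / c0) * ennreal (K * q)"
      proof -
        have "K * q = c0 * t powr (p * w)" unfolding K_def c0_def by (simp only: mult_ac)
        then have "(1 / c0) * (K * q) = t powr (p * w)" using c0 by simp
        then show ?thesis unfolding G_def t_def using c0 K0 q0 by (simp flip: ennreal_mult)
      qed
      also have "\<dots> \<le> ennreal (1 / c0) * IF x" using KI by (rule mult_left_mono) simp
      also have "\<dots> \<le> ennreal (1 / c0) * IF x + ennreal c1" by simp
      finally show ?thesis .
    next
      case False
      have "norm (x - z) powr (p * w) = (norm (x - z) powr w) powr p" by (simp add: powr_powr mult.commute)
      also have "\<dots> \<le> (2 * real R powr w) powr p" using False p by (intro powr_mono2) auto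
      finally have "G z x \<le> ennreal c1" unfolding G_def c1_def by (intro ennreal_leI)
      then show ?thesis by (simp add: add_increasing)
    qed
    have "C z \<le> (\<integral>\<^sup>+ x. ennreal (1 / c0) * IF x + ennreal c1 \<partial>M)"
      unfolding C_def using ptw by (intro nn_integral_mono) auto
    also have "\<dots> \<le> (\<integral>\<^sup>+ x. ennreal (1 / c0) * IF x \<partial>M) + (\<integral>\<^sup>+ x. ennreal c1 \<partial>M)"
      by (rule nn_integral_add_le_meas) simp
    also have "\<dots> \<le> ennreal (1 / c0) * A z + ennreal c1"
      unfolding A_def IF_def int_const by (intro add_right_mono nn_integral_cmult_le) simp
    also have "\<dots> < \<infinity>"
    proof -
      have "ennreal (1 / c0) * A z < \<infinity>" using Afin by (simp add: ennreal_mult_less_top)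
      then show ?thesis by simp
    qed
    finally show ?thesis .
  qed
  show "\<exists>f :: 'a \<Rightarrow> 'a. (\<forall>x y. norm (f x - f y) \<le> D * norm (x - y) powr \<omega>) \<and>
       (\<integral>\<^sup>+ x. \<integral>\<^sup>+ y. ennreal (norm (f x - f y) powr p) \<partial>M \<partial>M)
         \<ge> (\<integral>\<^sup>+ x. \<integral>\<^sup>+ y. ennreal (norm (x - y) powr (p * \<omega>)) \<partial>M \<partial>M)"
  proof -
    have intC: "(\<integral>\<^sup>+ z. C z \<partial>M) = B"
      unfolding C_def G_def B_def by (intro nn_integral_cong) (simp add: norm_minus_commute)
    have fin: "ennreal w * A z + ennreal ((1 - w) * rho) * (C z + C z) < \<infinity>"
      if "A z < \<infinity>" "C z < \<infinity>" for z
      using that by (simp add: ennreal_mult_less_top)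
    obtain z where zB: "B \<le> A z"
    proof (cases "B < \<infinity>")
      case False
      have "A 0 = \<infinity>"
      proof (rule ccontr)
        assume "A 0 \<noteq> \<infinity>"
        then have A0: "A 0 < \<infinity>" by (simp add: less_top)
        then have "C 0 < \<infinity>" by (rule tail)
        then have "ennreal w * A 0 + ennreal ((1 - w) * rho) * (C 0 + C 0) < \<infinity>" using fin[OF A0] by blast
        then have "B < \<infinity>" using step1[of 0] by (rule le_less_trans[rotated])
        then show False using False by simp
      qed
      then show ?thesis using that[of 0] by simp
    next
      case True
      then obtain b where b: "B = ennreal b" "0 \<le> b" by (cases B) auto
      show ?thesis
      proof (cases "b = 0")
        case True then show ?thesis using that[of 0] b by simp
      next
        case False
        then have b0: "0 < b" using b by simp
        define \<kappa> where "\<kappa> = 1 / (2 * rho)"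
        have \<kappa>1: "1 < \<kappa>" unfolding \<kappa>_def using rho0 rho2 by simp
        have "\<exists>z. C z \<le> ennreal (\<kappa> * b)"
        proof (rule ccontr)
          assume "\<not> ?thesis"
          then have "\<And>z. ennreal (\<kappa> * b) \<le> C z" by (simp add: not_le less_imp_le)
          then have "(\<integral>\<^sup>+ z. ennreal (\<kappa> * b) \<partial>M) \<le> (\<integral>\<^sup>+ z. C z \<partial>M)" by (intro nn_integral_mono) auto
          then have "ennreal (\<kappa> * b) \<le> ennreal b" unfolding int_const intC b by simp
          then have "\<kappa> * b \<le> b" using b by (simp add: ennreal_le_iff)
          then show False using \<kappa>1 b0 by simp
        qed
        then obtain z where Cz: "C z \<le> ennreal (\<kappa> * b)" by blast
        have "B \<le> A z"
        proof (cases "A z < \<infinity>")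
          case False then show ?thesis by (simp add: not_less top_unique)
        next
          case True
          then obtain a where a: "A z = ennreal a" "0 \<le> a" by (cases "A z") auto
          have "C z < \<infinity>" using Cz by (simp add: le_less_trans)
          then obtain c where c: "C z = ennreal c" "0 \<le> c" by (cases "C z") auto
          have cb: "c \<le> \<kappa> * b" using Cz c b \<kappa>1 by (simp add: ennreal_le_iff)
          have EC: "ennreal (w * a + ((1 - w) * rho) * (c + c)) = ennreal w * ennreal a + ennreal ((1 - w) * rho) * (ennreal c + ennreal c)"
            using a c w rho0 by (intro ennreal_comb) auto
          have "ennreal b \<le> ennreal (w * a + ((1 - w) * rho) * (c + c))"
            using step1[of z] unfolding a(1) c(1) b(1) EC .
          then have ineq: "b \<le> w * a + ((1 - w) * rho) * (c + c)"
            using a c w rho0 by (subst (asm) ennreal_le_iff) auto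
          have "rho * (c + c) \<le> rho * (2 * (\<kappa> * b))" using cb rho0 by (intro mult_left_mono) auto
          also have "\<dots> = b" unfolding \<kappa>_def using rho0 by simp
          finally have "((1 - w) * rho) * (c + c) \<le> (1 - w) * b"
            using w by (simp add: mult.assoc mult_left_mono)
          moreover have "(1 - w) * b = b - w * b" by (simp add: algebra_simps)
          ultimately have "w * b \<le> w * a" using ineq by linarith
          then have "b \<le> a" using w by simp
          then show ?thesis unfolding a b using a by (simp add: ennreal_leI)
        qed
        then show ?thesis by (rule that)
      qed
    qed
    show ?thesis
    proof (rule exI[of _ "f z"], intro conjI allI)
      fix x y show "norm (f z x - f z y) \<le> D * norm (x - y) powr \<omega>" using holder[of z x y] unfolding w_def .
    next
      show "(\<integral>\<^sup>+ x. \<integral>\<^sup>+ y. ennreal (norm (f z x - f z y) powr p) \<partial>M \<partial>M)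
         \<ge> (\<integral>\<^sup>+ x. \<integral>\<^sup>+ y. ennreal (norm (x - y) powr (p * \<omega>)) \<partial>M \<partial>M)"
        using zB unfolding A_def F_def B_def w_def .
    qed
  qed
qed

end
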